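(* Consider the switched system $x(t+1)=Ax(t)+\sigma(t)Bu(t)$, with output $y(t)=Cx(t)$ if $\sigma(t)=1$ and no output if $\sigma(t)=0$, where $A\in\mathbb{R}^{n\times n}$ is invertible, $B\in\mathbb{R}^{n\times m}$, $C\in\mathbb{R}^{p\times n}$, and the switching signal $\sigma:\mathbb{N}\to\{0,1\}$ ranges over the admissible signals $\mathcal{L}(\mathcal{A})$ of a given automaton $\mathcal{A}$. Suppose this system is observable. Let $\sigma_1,\sigma_2\in\mathcal{L}(\mathcal{A})$ and, for $i=1,2$, let $t_{\sigma_i}$ be the first time instance $t$ at which the observability matrix $O_{\sigma_i(t)}(C,A)$ has full column rank $n$. If $\sigma_1\preceq\sigma_2$, then $t_{\sigma_1}\ge t_{\sigma_2}$.
   Context: An automaton $\mathcal{A}$ is a directed graph whose edges are labeled by $0$ or $1$; a binary sequence $\sigma(0)\sigma(1)\ldots$ is admissible if there is a path in the graph carrying this sequence as the succession of labels on its edges, and $\mathcal{L}(\mathcal{A})$ is the set of admissible sequences. $\sigma(t)=0$ represents a packet dropout and $\sigma(t)=1$ a successful transmission. For a switching signal $\sigma$ and $t\in\mathbb{N}$, the observability matrix is $O_{\sigma(t)}(C,A)=\begin{bmatrix}\sigma(0)C\\ \sigma(1)CA\\ \vdots\\ \sigma(t)CA^t\end{bmatrix}$. The system is observable if for every $\sigma\in\mathcal{L}(\mathcal{A})$ and any initial states $x_0,\tilde x_0$, equality of the outputs $y(t,x_0,\sigma)=y(t,\tilde x_0,\sigma)$ for all $t\in\mathbb{N}$ implies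 $x_0=\tilde x_0$. Partial order: $\sigma_1\preceq\sigma_2$ if for every $i$ with $\sigma_1(i)=1$ we also have $\sigma_2(i)=1$. *)

theory Defs
  imports "Jordan_Normal_Form.DL_Rank"
begin

text \<open>An automaton: a directed graph whose edges (q, l, q') carry labels l in {0,1}.\<close>
definition label_ok :: "('s \<times> nat \<times> 's) set \<Rightarrow> bool" where
  "label_ok E \<longleftrightarrow> (\<forall>(q, l, q') \<in> E. l \<in> {0, 1})"

definition admissible :: "('s \<times> nat \<times> 's) set \<Rightarrow> (nat \<Rightarrow> nat) set" where
  "admissible E = {\<sigma>. \<exists>q :: nat \<Rightarrow> 's. \<forall>t. (q t, \<sigma> t, q (Suc t)) \<in> E}"

fun traj :: "real mat \<Rightarrow> real mat \<Rightarrow> (nat \<Rightarrow> nat) \<Rightarrow> (nat \<Rightarrow> real vec) \<Rightarrow> real vec \<Rightarrow> nat \<Rightarrow> real vec" where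
  "traj A B \<sigma> u x0 0 = x0"
| "traj A B \<sigma> u x0 (Suc t) = A *\<^sub>v traj A B \<sigma> u x0 t + real (\<sigma> t) \<cdot>\<^sub>v (B *\<^sub>v u t)"

definition sys_output :: "real mat \<Rightarrow> real mat \<Rightarrow> real mat \<Rightarrow> (nat \<Rightarrow> nat) \<Rightarrow> (nat \<Rightarrow> real vec) \<Rightarrow> real vec \<Rightarrow> nat \<Rightarrow> real vec option" where
  "sys_output A B C \<sigma> u x0 t = (if \<sigma> t = 1 then Some (C *\<^sub>v traj A B \<sigma> u x0 t) else None)"

definition observable :: "('s \<times> nat \<times> 's) set \<Rightarrow> real mat \<Rightarrow> real mat \<Rightarrow> real mat \<Rightarrow> bool" where
  "observable E A B C \<longleftrightarrow>
     (\<forall>\<sigma> \<in> admissible E. \<forall>u x0 x0'.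
        x0 \<in> carrier_vec (dim_col A) \<and> x0' \<in> carrier_vec (dim_col A) \<and>
        (\<forall>t. u t \<in> carrier_vec (dim_col B)) \<and>
        (\<forall>t. sys_output A B C \<sigma> u x0 t = sys_output A B C \<sigma> u x0' t) \<longrightarrow> x0 = x0')"

text \<open>Observability matrix O_{sigma(t)}(C,A) = [sigma(0) C; sigma(1) C A; ...; sigma(t) C A^t].\<close>
definition obs_mat :: "real mat \<Rightarrow> real mat \<Rightarrow> (nat \<Rightarrow> nat) \<Rightarrow> nat \<Rightarrow> real mat" where
  "obs_mat C A \<sigma> t = mat (Suc t * dim_row C) (dim_col A)
     (\<lambda>(i, j). real (\<sigma> (i div dim_row C)) * (C * A ^\<^sub>m (i div dim_row C)) $$ (i mod dim_row C, j))"

definition mat_rank :: "real mat \<Rightarrow> nat" where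
  "mat_rank M = vec_space.rank (dim_row M) M"

definition first_full_rank :: "real mat \<Rightarrow> real mat \<Rightarrow> (nat \<Rightarrow> nat) \<Rightarrow> nat" where
  "first_full_rank C A \<sigma> = (LEAST t. mat_rank (obs_mat C A \<sigma> t) = dim_col A)"

definition sig_le :: "(nat \<Rightarrow> nat) \<Rightarrow> (nat \<Rightarrow> nat) \<Rightarrow> bool" where
  "sig_le \<sigma>1 \<sigma>2 \<longleftrightarrow> (\<forall>i. \<sigma>1 i = 1 \<longrightarrow> \<sigma>2 i = 1)"

end

theory Submission
  imports Defs
begin


lemma (in vec_space) rank_le_card_cols:
  assumes "A \<in> carrier_mat n nc"
  shows "rank A \<le> card (set (cols A))"
proof -
  obtain S where "maximal S (\<lambda>T. T \<subseteq> set (cols A) \<and> lin_indpt T)"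
    using maximal_exists[of "(\<lambda>T. T \<subseteq> set (cols A) \<and> lin_indpt T)" "card (set (cols A))" "{}"]
    by (meson List.finite_set card_mono empty_iff empty_subsetI finite_lin_indpt2 rev_finite_subset)
  then have "card S \<le> card (set (cols A))" by (simp add: card_mono maximal_def)
  then show ?thesis
    using rank_card_indpt[OF assms \<open>maximal S (\<lambda>T. T \<subseteq> set (cols A) \<and> lin_indpt T)\<close>]
    by simp
qed

lemma (in vec_space) full_rank_iff_kernel:
  fixes A :: "'a mat"
  assumes A: "A \<in> carrier_mat n nc"
  shows "rank A = nc \<longleftrightarrow> (\<forall>v\<in>carrier_vec nc. A *\<^sub>v v = 0\<^sub>v n \<longrightarrow> v = 0\<^sub>v nc)"
proof
  assume r: "rank A = nc"
  have d: "distinct (cols A)"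
  proof (rule ccontr)
    assume "\<not> distinct (cols A)"
    then have "card (set (cols A)) < nc"
      using A card_distinct card_length cols_length carrier_matD(2) nat_less_le by metis
    with rank_le_card_cols[OF A] r show False by simp
  qed
  have li: "lin_indpt (set (cols A))" using full_rank_lin_indpt[OF A r d] .
  show "\<forall>v\<in>carrier_vec nc. A *\<^sub>v v = 0\<^sub>v n \<longrightarrow> v = 0\<^sub>v nc"
    using lin_depI[OF A _ _ _ d] li by blast
next
  assume k: "\<forall>v\<in>carrier_vec nc. A *\<^sub>v v = 0\<^sub>v n \<longrightarrow> v = 0\<^sub>v nc"
  have d: "distinct (cols A)"
  proof (rule ccontr)
    assume "\<not> distinct (cols A)"
    then obtain i j where ij: "i < nc" "j < nc" "i \<noteq> j" "cols A ! i = cols A ! j"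
      using A by (metis cols_length carrier_matD(2) distinct_conv_nth)
    then have cij: "col A i = col A j" using A by auto
    define v :: "'a vec" where "v = unit_vec nc i - unit_vec nc j"
    have vc: "v \<in> carrier_vec nc" unfolding v_def by auto
    have "A *\<^sub>v v = 0\<^sub>v n"
    proof (rule eq_vecI)
      show "dim_vec (A *\<^sub>v v) = dim_vec (0\<^sub>v n)" using A by auto
      fix r assume "r < dim_vec (0\<^sub>v n)"
      then have r: "r < n" by auto
      have "(A *\<^sub>v v) $ r = row A r \<bullet> v" using A r by auto
      also have "\<dots> = row A r \<bullet> unit_vec nc i - row A r \<bullet> unit_vec nc j"
        unfolding v_def using A r by (intro scalar_prod_minus_distrib[of _ nc]) auto
      also have "\<dots> = A $$ (r, i) - A $$ (r, j)" using A r ij by simp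
      also have "\<dots> = 0" using cij A r ij by (metis col_def index_vec carrier_matD right_minus_eq)
      finally show "(A *\<^sub>v v) $ r = 0\<^sub>v n $ r" using r by simp
    qed
    moreover have "v $ i = 1" unfolding v_def using ij by simp
    then have "v \<noteq> 0\<^sub>v nc" using ij by auto
    ultimately show False using k vc by blast
  qed
  have "lin_indpt (set (cols A))"
  proof (rule ccontr)
    assume "\<not> lin_indpt (set (cols A))"
    then obtain v where "v \<in> carrier_vec nc" "v \<noteq> 0\<^sub>v nc" "A *\<^sub>v v = 0\<^sub>v n"
      using lin_depE[OF A _ d] by blast
    then show False using k by blast
  qed
  then show "rank A = nc" using lin_indpt_full_rank[OF A d] by blast
qed



lemma (in vec_space) chain_stable:
  fixes K :: "nat \<Rightarrow> 'a vec set"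
  assumes sub: "\<And>t. submodule class_ring (K t) V"
    and mono: "\<And>t s. t \<le> s \<Longrightarrow> K s \<subseteq> K t"
    and nz: "\<And>t. \<exists>v\<in>K t. v \<noteq> 0\<^sub>v n"
  shows "\<exists>v. v \<noteq> 0\<^sub>v n \<and> (\<forall>t. v \<in> K t)"
proof -
  have Kc: "K t \<subseteq> carrier_vec n" for t using sub[of t] unfolding submodule_def by auto
  define F where "F t = {card S | S. S \<subseteq> K t \<and> lin_indpt S}" for t
  have Fb: "F t \<subseteq> {..n}" for t
  proof
    fix x assume "x \<in> F t"
    then obtain S where "S \<subseteq> K t" "lin_indpt S" "x = card S" unfolding F_def by blast
    moreover have "S \<subseteq> carrier_vec n" using \<open>S \<subseteq> K t\<close> Kc by blast
    ultimately show "x \<in> {..n}" using li_le_dim(2)[OF fin_dim] dim_is_n by simp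
  qed
  have Ffin: "finite (F t)" for t using Fb finite_subset by blast
  have Fne: "0 \<in> F t" for t
  proof -
    have "lin_indpt {}" unfolding lin_dep_def by blast
    then show ?thesis unfolding F_def by force
  qed
  define f where "f t = Max (F t)" for t
  have fb: "f t \<le> n" for t 
  proof -
    have "Max (F t) \<in> F t" using Max_in[OF Ffin] Fne by blast
    then show ?thesis unfolding f_def using Fb by blast
  qed
  have fmono: "t \<le> s \<Longrightarrow> f s \<le> f t" for t s
  proof -
    assume "t \<le> s"
    then have "F s \<subseteq> F t" unfolding F_def using mono by blast
    then show ?thesis unfolding f_def using Ffin Fne by (intro Max_mono) auto
  qed
  define d where "d = Min (range f)"
  have "range f \<subseteq> {..n}" using fb by auto
  then have rf: "finite (range f)" using finite_subset by blast
  obtain T where fT: "f T = d" unfolding d_def using Min_in[OF rf] by auto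
  have dle: "d \<le> f t" for t unfolding d_def using rf by simp
  have KT: "K T \<subseteq> K t" for t
  proof -
    define t' where "t' = max t T"
    have "f t' = d" using fmono[of T t'] dle[of t'] fT unfolding t'_def by simp
    then have "d \<in> F t'" unfolding f_def using Max_in[OF Ffin] Fne by (metis empty_iff)
    then obtain S where S: "S \<subseteq> K t'" "lin_indpt S" "card S = d" unfolding F_def by auto
    have ST: "S \<subseteq> K T" using S(1) mono[of T t'] unfolding t'_def by auto
    have Scar: "S \<subseteq> carrier_vec n" using S(1) Kc by blast
    have Sfin: "finite S" by (rule li_le_dim(1)[OF fin_dim Scar S(2)])
    have "K T \<subseteq> span S"
    proof
      fix v assume v: "v \<in> K T"
      show "v \<in> span S"
      proof (rule ccontr)
        assume nv: "v \<notin> span S"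
        have vS: "v \<notin> S" using nv in_own_span[OF Scar] by blast
        have vc: "v \<in> carrier_vec n" using v Kc by blast
        have "lin_indpt (S \<union> {v})"
          using lin_dep_iff_in_span[OF Scar S(2) vc vS] nv by simp
        moreover have "S \<union> {v} \<subseteq> K T" using ST v by auto
        ultimately have "card (S \<union> {v}) \<in> F T" unfolding F_def by blast
        then have "card (S \<union> {v}) \<le> f T" unfolding f_def using Ffin by simp
        moreover have "card (S \<union> {v}) = d + 1" using Sfin vS S(3) by simp
        ultimately show False using fT by simp
      qed
    qed
    also have "span S \<subseteq> K t'" using span_is_subset[OF S(1) sub] .
    also have "K t' \<subseteq> K t" using mono[of t t'] unfolding t'_def by auto
    finally show ?thesis .
  qed
  obtain v where "v \<in> K T" "v \<noteq> 0\<^sub>v n" using nz by blast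
  then show ?thesis using KT by blast
qed



lemma obs_mat_carrier:
  assumes "A \<in> carrier_mat n n" "C \<in> carrier_mat p n"
  shows "obs_mat C A \<sigma> t \<in> carrier_mat (Suc t * p) n"
  using assms unfolding obs_mat_def by auto

lemma mat_vec_index_sum:
  assumes "M \<in> carrier_mat p n" "r < p" "v \<in> carrier_vec n"
  shows "(M *\<^sub>v v) $ r = (\<Sum>j<n. M $$ (r, j) * v $ j)"
  using assms by (auto simp: mult_mat_vec_def scalar_prod_def atLeast0LessThan intro!: sum.cong)

lemma obs_entry:
  assumes A: "A \<in> carrier_mat n n" and C: "C \<in> carrier_mat p n" and v: "v \<in> carrier_vec n"
    and i: "i < Suc t * p"
  shows "(obs_mat C A \<sigma> t *\<^sub>v v) $ i
     = real (\<sigma> (i div p)) * (((C * A ^\<^sub>m (i div p)) *\<^sub>v v) $ (i mod p))"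
proof -
  have p: "p > 0" using i by (cases p) auto
  have r: "i mod p < p" using p by simp
  have CA: "C * A ^\<^sub>m (i div p) \<in> carrier_mat p n" using A C by auto
  have "(obs_mat C A \<sigma> t *\<^sub>v v) $ i = row (obs_mat C A \<sigma> t) i \<bullet> v"
    using carrier_matD[OF obs_mat_carrier[OF A C]] i by auto
  also have "\<dots> = (\<Sum>j<n. (real (\<sigma> (i div p)) * (C * A ^\<^sub>m (i div p)) $$ (i mod p, j)) * v $ j)"
    unfolding scalar_prod_def using v i A C
    by (auto simp: obs_mat_def atLeast0LessThan intro!: sum.cong)
  also have "\<dots> = real (\<sigma> (i div p)) * (\<Sum>j<n. (C * A ^\<^sub>m (i div p)) $$ (i mod p, j) * v $ j)"
    by (simp add: sum_distrib_left mult.assoc)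
  also have "(\<Sum>j<n. (C * A ^\<^sub>m (i div p)) $$ (i mod p, j) * v $ j) = ((C * A ^\<^sub>m (i div p)) *\<^sub>v v) $ (i mod p)"
    using mat_vec_index_sum[OF CA r v] by simp
  finally show ?thesis .
qed

lemma obs_kernel:
  assumes A: "A \<in> carrier_mat n n" and C: "C \<in> carrier_mat p n" and v: "v \<in> carrier_vec n"
  shows "(obs_mat C A \<sigma> t *\<^sub>v v = 0\<^sub>v (Suc t * p)) \<longleftrightarrow>
         (\<forall>i\<le>t. \<sigma> i \<noteq> 0 \<longrightarrow> (C * A ^\<^sub>m i) *\<^sub>v v = 0\<^sub>v p)"
proof
  assume h: "obs_mat C A \<sigma> t *\<^sub>v v = 0\<^sub>v (Suc t * p)"
  show "\<forall>i\<le>t. \<sigma> i \<noteq> 0 \<longrightarrow> (C * A ^\<^sub>m i) *\<^sub>v v = 0\<^sub>v p"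
  proof (intro allI impI)
    fix k assume k: "k \<le> t" "\<sigma> k \<noteq> 0"
    show "(C * A ^\<^sub>m k) *\<^sub>v v = 0\<^sub>v p"
    proof (rule eq_vecI)
      show "dim_vec ((C * A ^\<^sub>m k) *\<^sub>v v) = dim_vec (0\<^sub>v p)" using C by simp
      fix r assume "r < dim_vec (0\<^sub>v p)"
      then have r: "r < p" by simp
      define i where "i = k * p + r"
      have idiv: "i div p = k" "i mod p = r" using r unfolding i_def by auto
      have "k * p + r < Suc k * p" using r by simp
      also have "Suc k * p \<le> Suc t * p" using k(1) by simp
      finally have "i < Suc t * p" unfolding i_def .
      have "(obs_mat C A \<sigma> t *\<^sub>v v) $ i = 0" using h \<open>i < Suc t * p\<close> by simp
      then have "real (\<sigma> k) * (((C * A ^\<^sub>m k) *\<^sub>v v) $ r) = 0"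
        using obs_entry[OF A C v \<open>i < Suc t * p\<close>, of \<sigma>] idiv by simp
      then show "((C * A ^\<^sub>m k) *\<^sub>v v) $ r = 0\<^sub>v p $ r" using k(2) r by simp
    qed
  qed
next
  assume h: "\<forall>i\<le>t. \<sigma> i \<noteq> 0 \<longrightarrow> (C * A ^\<^sub>m i) *\<^sub>v v = 0\<^sub>v p"
  show "obs_mat C A \<sigma> t *\<^sub>v v = 0\<^sub>v (Suc t * p)"
  proof (rule eq_vecI)
    show "dim_vec (obs_mat C A \<sigma> t *\<^sub>v v) = dim_vec (0\<^sub>v (Suc t * p))"
      using carrier_matD[OF obs_mat_carrier[OF A C]] by simp
    fix i assume "i < dim_vec (0\<^sub>v (Suc t * p))"
    then have i: "i < Suc t * p" by simp
    have p: "p > 0" using i by (cases p) auto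
    have "i div p < Suc t" using i p by (simp add: div_less_iff_less_mult)
    then have kt: "i div p \<le> t" by simp
    have r: "i mod p < p" using p by simp
    show "(obs_mat C A \<sigma> t *\<^sub>v v) $ i = 0\<^sub>v (Suc t * p) $ i"
      using obs_entry[OF A C v i, of \<sigma>] h kt r i by (cases "\<sigma> (i div p) = 0") auto
  qed
qed

lemma full_rank_obs_iff:
  assumes A: "A \<in> carrier_mat n n" and C: "C \<in> carrier_mat p n"
  shows "mat_rank (obs_mat C A \<sigma> t) = dim_col A \<longleftrightarrow>
    (\<forall>v\<in>carrier_vec n. (\<forall>i\<le>t. \<sigma> i \<noteq> 0 \<longrightarrow> (C * A ^\<^sub>m i) *\<^sub>v v = 0\<^sub>v p) \<longrightarrow> v = 0\<^sub>v n)"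
proof -
  have M: "obs_mat C A \<sigma> t \<in> carrier_mat (Suc t * p) n" using obs_mat_carrier[OF A C] .
  have "mat_rank (obs_mat C A \<sigma> t) = vec_space.rank (Suc t * p) (obs_mat C A \<sigma> t)"
    unfolding mat_rank_def using M by simp
  then show ?thesis using vec_space.full_rank_iff_kernel[OF M] obs_kernel[OF A C] A by auto
qed



lemma mat_vec_zero:
  assumes "M \<in> carrier_mat nr nc"
  shows "M *\<^sub>v 0\<^sub>v nc = 0\<^sub>v nr"
  using assms by (intro eq_vecI) (auto simp: scalar_prod_def)

lemma pow_mat_comm:
  assumes A: "A \<in> carrier_mat n n"
  shows "A * A ^\<^sub>m k = A ^\<^sub>m k * A"
proof (induction k)
  case 0
  then show ?case using A by simp
next
  case (Suc k)
  have "A * A ^\<^sub>m Suc k = (A * A ^\<^sub>m k) * A" using A by (simp add: assoc_mult_mat[of _ n n _ n _ n])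
  also have "\<dots> = A ^\<^sub>m Suc k * A" using Suc by simp
  finally show ?case .
qed

lemma traj_zero_input:
  assumes A: "A \<in> carrier_mat n n" and B: "B \<in> carrier_mat n m" and x: "x0 \<in> carrier_vec n"
  shows "traj A B \<sigma> (\<lambda>_. 0\<^sub>v m) x0 t = A ^\<^sub>m t *\<^sub>v x0"
proof (induction t)
  case 0
  then show ?case using A x by simp
next
  case (Suc t)
  have Bz: "B *\<^sub>v 0\<^sub>v m = 0\<^sub>v n" using B by (intro eq_vecI) (auto simp: scalar_prod_def)
  have "traj A B \<sigma> (\<lambda>_. 0\<^sub>v m) x0 (Suc t) = A *\<^sub>v (A ^\<^sub>m t *\<^sub>v x0) + real (\<sigma> t) \<cdot>\<^sub>v 0\<^sub>v n"
    using Suc Bz by simp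
  also have "\<dots> = A *\<^sub>v (A ^\<^sub>m t *\<^sub>v x0)"
  proof -
    have "real (\<sigma> t) \<cdot>\<^sub>v 0\<^sub>v n = 0\<^sub>v n" by (intro eq_vecI) auto
    moreover have "A *\<^sub>v (A ^\<^sub>m t *\<^sub>v x0) \<in> carrier_vec n" using A x by (meson mult_mat_vec_carrier pow_carrier_mat)
    ultimately show ?thesis by simp
  qed
  also have "\<dots> = (A * A ^\<^sub>m t) *\<^sub>v x0" using assoc_mult_mat_vec[OF A pow_carrier_mat[OF A] x] by simp
  also have "\<dots> = A ^\<^sub>m Suc t *\<^sub>v x0" using pow_mat_comm[OF A] by simp
  finally show ?case .
qed

lemma exists_full_rank:
  assumes A: "A \<in> carrier_mat n n" and B: "B \<in> carrier_mat n m" and C: "C \<in> carrier_mat p n"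
    and obs: "observable E A B C" and sig: "\<sigma> \<in> admissible E"
  shows "\<exists>t. mat_rank (obs_mat C A \<sigma> t) = dim_col A"
proof (rule ccontr)
  assume nt: "\<not> (\<exists>t. mat_rank (obs_mat C A \<sigma> t) = dim_col A)"
  define Z where "Z t v \<longleftrightarrow> (\<forall>i\<le>t. \<sigma> i \<noteq> 0 \<longrightarrow> (C * A ^\<^sub>m i) *\<^sub>v v = 0\<^sub>v p)" for t v
  define K where "K t = {v \<in> carrier_vec n. Z t v}" for t
  have nz: "\<exists>v\<in>K t. v \<noteq> 0\<^sub>v n" for t
    using nt full_rank_obs_iff[OF A C, of \<sigma> t] unfolding K_def Z_def by blast
  interpret VS: vec_space "TYPE(real)" n .
  have sub: "submodule class_ring (K t) VS.V" for t
  proof -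
    have CA: "C * A ^\<^sub>m i \<in> carrier_mat p n" for i using A C by auto
    show ?thesis
      unfolding submodule_def K_def Z_def
      using VS.module_axioms
      by (auto simp: module_vec_simps class_ring_simps mult_add_distrib_mat_vec[OF CA]
          mult_mat_vec[OF CA] CA mat_vec_zero[OF CA])
  qed
  have mono: "t \<le> s \<Longrightarrow> K s \<subseteq> K t" for t s unfolding K_def Z_def by auto
  obtain v where v: "v \<noteq> 0\<^sub>v n" "\<forall>t. v \<in> K t"
    using VS.chain_stable[of K, OF sub mono nz] by blast
  have vc: "v \<in> carrier_vec n" using v K_def by auto
  have "v = 0\<^sub>v n"
  proof -
    have "sys_output A B C \<sigma> (\<lambda>_. 0\<^sub>v m) v t = sys_output A B C \<sigma> (\<lambda>_. 0\<^sub>v m) (0\<^sub>v n) t" for t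
    proof (cases "\<sigma> t = 1")
      case True
      have "Z t v" using v(2) K_def by auto
      then have "(C * A ^\<^sub>m t) *\<^sub>v v = 0\<^sub>v p" unfolding Z_def using True by auto
      then have "C *\<^sub>v (A ^\<^sub>m t *\<^sub>v v) = 0\<^sub>v p" using assoc_mult_mat_vec[OF C pow_carrier_mat[OF A] vc] by simp
      moreover have "C *\<^sub>v (A ^\<^sub>m t *\<^sub>v 0\<^sub>v n) = 0\<^sub>v p"
        using mat_vec_zero[OF pow_carrier_mat[OF A], of t] mat_vec_zero[OF C] by simp
      ultimately show ?thesis unfolding sys_output_def
        using traj_zero_input[OF A B vc] traj_zero_input[OF A B zero_carrier_vec] by simp
    next
      case False
      then show ?thesis unfolding sys_output_def by simp
    qed
    note eqo = this
    have o: "\<forall>u x0 x0'. x0 \<in> carrier_vec (dim_col A) \<and> x0' \<in> carrier_vec (dim_col A) \<and>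
        (\<forall>t. u t \<in> carrier_vec (dim_col B)) \<and>
        (\<forall>t. sys_output A B C \<sigma> u x0 t = sys_output A B C \<sigma> u x0' t) \<longrightarrow> x0 = x0'"
      using obs sig unfolding observable_def by blast
    have "dim_col A = n" "dim_col B = m" using A B by auto
    then show ?thesis using o[rule_format, of v "0\<^sub>v n" "\<lambda>_. 0\<^sub>v m"] vc eqo by simp
  qed
  then show False using v(1) by simp
qed


theorem mainTheorem1:
  fixes E :: "('s \<times> nat \<times> 's) set"
    and A B C :: "real mat" and n m p :: nat
    and \<sigma>1 \<sigma>2 :: "nat \<Rightarrow> nat"
  assumes "label_ok E"
    and "A \<in> carrier_mat n n" and "invertible_mat A"
    and "B \<in> carrier_mat n m" and "C \<in> carrier_mat p n"
    and "observable E A B C"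
    and "\<sigma>1 \<in> admissible E" and "\<sigma>2 \<in> admissible E"
    and "sig_le \<sigma>1 \<sigma>2"
  shows "first_full_rank C A \<sigma>1 \<ge> first_full_rank C A \<sigma>2"
proof -
  note A = assms(2) and B = assms(4) and C = assms(5)
  have s01: "\<sigma>1 i \<in> {0, 1}" for i
  proof -
    obtain q where "\<forall>t. (q t, \<sigma>1 t, q (Suc t)) \<in> E" using assms(7) unfolding admissible_def by blast
    then have "(q i, \<sigma>1 i, q (Suc i)) \<in> E" by blast
    then show ?thesis using assms(1) unfolding label_ok_def by fastforce
  qed
  have imp: "\<sigma>1 i \<noteq> 0 \<Longrightarrow> \<sigma>2 i \<noteq> 0" for i
    using s01[of i] assms(9) unfolding sig_le_def by auto
  let ?P = "\<lambda>\<sigma> t. mat_rank (obs_mat C A \<sigma> t) = dim_col A"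
  have ex: "\<exists>t. ?P \<sigma>1 t" using exists_full_rank[OF A B C assms(6,7)] .
  define t1 where "t1 = first_full_rank C A \<sigma>1"
  have P1: "?P \<sigma>1 t1" unfolding t1_def first_full_rank_def using LeastI_ex[OF ex] .
  have "?P \<sigma>2 t1"
    using P1 imp unfolding full_rank_obs_iff[OF A C] by blast
  then have "first_full_rank C A \<sigma>2 \<le> t1" unfolding first_full_rank_def by (rule Least_le)
  then show ?thesis unfolding t1_def .
qed

end
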